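(* Let $R$ be a finite commutative Frobenius ring of characteristic $2$ and let $B$ and $C$ be $n\times n$ matrices over $R$. Let $M$ be the $2n\times 4n$ matrix $$M=\left(\, I_{2n} \;\middle|\; \begin{matrix} B & C\\ C & B\end{matrix}\,\right).$$ Then the code generated by $M$ (the $R$-submodule of $R^{4n}$ spanned by the rows of $M$) is self-dual if and only if $(B+C)(B+C)^T=I_n$ and $BC^T=CB^T$.
   Context: A linear code of length $N$ over $R$ is an $R$-submodule $\mathcal{C}\subseteq R^N$; its dual is $\mathcal{C}^\perp=\{x\in R^N : \langle x,c\rangle=0 \text{ for all } c\in\mathcal{C}\}$ with respect to the Euclidean inner product $\langle x,y\rangle=\sum_i x_iy_i$, and $\mathcal{C}$ is self-dual if $\mathcal{C}=\mathcal{C}^\perp$. *)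

theory Defs
  imports Main "Jordan_Normal_Form.Matrix"
begin

definition is_ideal :: "'a :: comm_ring_1 set \<Rightarrow> bool" where
  "is_ideal I \<longleftrightarrow> 0 \<in> I \<and> (\<forall>x\<in>I. \<forall>y\<in>I. x + y \<in> I) \<and> (\<forall>r. \<forall>x\<in>I. r * x \<in> I)"

definition minimal_ideal :: "'a :: comm_ring_1 set \<Rightarrow> bool" where
  "minimal_ideal I \<longleftrightarrow> is_ideal I \<and> I \<noteq> {0} \<and>
     (\<forall>J. is_ideal J \<and> J \<subseteq> I \<longrightarrow> J = {0} \<or> J = I)"

definition maximal_ideal :: "'a :: comm_ring_1 set \<Rightarrow> bool" where
  "maximal_ideal I \<longleftrightarrow> is_ideal I \<and> I \<noteq> UNIV \<and>
     (\<forall>J. is_ideal J \<and> I \<subseteq> J \<longrightarrow> J = I \<or> J = UNIV)"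

text \<open>Socle: the sum of all minimal ideals (= smallest ideal containing all of them).\<close>
definition socle :: "'a :: comm_ring_1 set" where
  "socle = \<Inter> {I. is_ideal I \<and> \<Union> {J. minimal_ideal J} \<subseteq> I}"

definition jacobson_radical :: "'a :: comm_ring_1 set" where
  "jacobson_radical = \<Inter> {I. maximal_ideal I}"

text \<open>R is Frobenius iff soc(R) is isomorphic to R/rad(R) as R-modules.
  An R-module isomorphism soc(R) -> R/J is given by x \<mapsto> g x + J, where g is
  additive and R-linear modulo J, and the induced map is a bijection onto the cosets.\<close>
definition Frobenius_ring :: "'a :: comm_ring_1 itself \<Rightarrow> bool" where
  "Frobenius_ring _ \<longleftrightarrow>
    (\<exists>g :: 'a \<Rightarrow> 'a.
       (\<forall>x\<in>socle. \<forall>y\<in>socle. g (x + y) - (g x + g y) \<in> jacobson_radical) \<and>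
       (\<forall>r. \<forall>x\<in>socle. g (r * x) - r * g x \<in> jacobson_radical) \<and>
       bij_betw (\<lambda>x. (+) (g x) ` jacobson_radical) socle
                {(+) a ` (jacobson_radical :: 'a set) | a. True})"

definition code_gen :: "'a :: comm_ring_1 mat \<Rightarrow> 'a vec set" where
  "code_gen M = {transpose_mat M *\<^sub>v u | u. u \<in> carrier_vec (dim_row M)}"

definition dual_code :: "nat \<Rightarrow> 'a :: comm_ring_1 vec set \<Rightarrow> 'a vec set" where
  "dual_code N C = {x \<in> carrier_vec N. \<forall>c\<in>C. x \<bullet> c = 0}"

definition self_dual :: "nat \<Rightarrow> 'a :: comm_ring_1 vec set \<Rightarrow> bool" where
  "self_dual N C \<longleftrightarrow> C = dual_code N C"

definition gen_matrix :: "nat \<Rightarrow> 'a :: comm_ring_1 mat \<Rightarrow> 'a mat \<Rightarrow> 'a mat" where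
  "gen_matrix n B C =
     (let A = four_block_mat B C C B
      in mat (2*n) (4*n) (\<lambda>(i,j). if j < 2*n then (1\<^sub>m (2*n)) $$ (i,j) else A $$ (i, j - 2*n)))"

end

theory Submission imports Defs "Jordan_Normal_Form.Determinant" begin

lemma left_right_inv:
  fixes A X :: "'a::comm_ring_1 mat"
  assumes A: "A \<in> carrier_mat n n" and X: "X \<in> carrier_mat n n" and AX: "A * X = 1\<^sub>m n"
  shows "X * A = 1\<^sub>m n"
proof -
  have d: "det X * det A = 1" using det_mult[OF A X] AX by (simp add: mult.commute)
  define L where "L = det X \<cdot>\<^sub>m adj_mat A"
  have L: "L \<in> carrier_mat n n" using adj_mat(1)[OF A] by (simp add: L_def)
  have LA: "L * A = 1\<^sub>m n"
  proof -
    have "L * A = det X \<cdot>\<^sub>m (adj_mat A * A)"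
      unfolding L_def using mult_smult_assoc_mat[OF adj_mat(1)[OF A] A] .
    also have "\<dots> = det X \<cdot>\<^sub>m (det A \<cdot>\<^sub>m 1\<^sub>m n)" using adj_mat(3)[OF A] by simp
    also have "\<dots> = 1\<^sub>m n" using d by (intro eq_matI) auto
    finally show ?thesis .
  qed
  have "L = L * (A * X)" using AX L by simp
  also have "\<dots> = (L * A) * X" using L A X by (simp add: assoc_mult_mat)
  also have "\<dots> = X" using LA X by simp
  finally show ?thesis using LA by simp
qed

lemma GT:
  fixes A :: "'a::comm_ring_1 mat"
  assumes A: "A \<in> carrier_mat N N" and u: "u \<in> carrier_vec N"
  shows "transpose_mat (mat N (2*N) (\<lambda>(i,j). if j < N then (1\<^sub>m N) $$ (i,j) else A $$ (i, j - N))) *\<^sub>v u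
     = u @\<^sub>v (transpose_mat A *\<^sub>v u)"
proof (rule eq_vecI)
  fix i assume i: "i < dim_vec (u @\<^sub>v (transpose_mat A *\<^sub>v u))"
  hence i2: "i < 2*N" using A u by auto
  show "(transpose_mat (mat N (2*N) (\<lambda>(i,j). if j < N then (1\<^sub>m N) $$ (i,j) else A $$ (i, j - N))) *\<^sub>v u) $ i
     = (u @\<^sub>v (transpose_mat A *\<^sub>v u)) $ i"
  proof (cases "i < N")
    case True
    have "col (mat N (2*N) (\<lambda>(i,j). if j < N then (1\<^sub>m N) $$ (i,j) else A $$ (i, j - N))) i = unit_vec N i"
      using True i2 by (intro eq_vecI) (auto simp: unit_vec_def)
    then show ?thesis using True i2 u by simp
  next
    case False
    have "col (mat N (2*N) (\<lambda>(i,j). if j < N then (1\<^sub>m N) $$ (i,j) else A $$ (i, j - N))) i = col A (i - N)"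
      using False i2 A by (intro eq_vecI) auto
    then show ?thesis using False i2 u A by simp
  qed
qed (use A u in auto)

lemma sd_iff:
  fixes A :: "'a::comm_ring_1 mat"
  assumes A: "A \<in> carrier_mat N N"
  defines "S \<equiv> {u @\<^sub>v (transpose_mat A *\<^sub>v u) | u. u \<in> carrier_vec N}"
  shows "S = dual_code (2*N) S \<longleftrightarrow> A * transpose_mat A = - 1\<^sub>m N"
proof -
  have AT: "transpose_mat A \<in> carrier_mat N N" using A by simp
  have dotS: "(u @\<^sub>v (transpose_mat A *\<^sub>v u)) \<bullet> (v @\<^sub>v (transpose_mat A *\<^sub>v v))
      = u \<bullet> v + u \<bullet> ((A * transpose_mat A) *\<^sub>v v)"
    if u: "u \<in> carrier_vec N" and v: "v \<in> carrier_vec N" for u v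
  proof -
    have "(u @\<^sub>v (transpose_mat A *\<^sub>v u)) \<bullet> (v @\<^sub>v (transpose_mat A *\<^sub>v v))
       = u \<bullet> v + (transpose_mat A *\<^sub>v u) \<bullet> (transpose_mat A *\<^sub>v v)"
      by (rule scalar_prod_append[of _ N _ N]) (use u v AT in auto)
    also have "(transpose_mat A *\<^sub>v u) \<bullet> (transpose_mat A *\<^sub>v v) = u \<bullet> (A *\<^sub>v (transpose_mat A *\<^sub>v v))"
      by (rule transpose_vec_mult_scalar[OF A]) (use u v AT in auto)
    also have "A *\<^sub>v (transpose_mat A *\<^sub>v v) = (A * transpose_mat A) *\<^sub>v v"
      using A AT v by simp
    finally show ?thesis .
  qed
  have Scar: "S \<subseteq> carrier_vec (2*N)" unfolding S_def mult_2 using AT by auto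
  show ?thesis
  proof
    assume eq: "S = dual_code (2*N) S"
    show "A * transpose_mat A = - 1\<^sub>m N"
    proof (rule eq_matI)
      fix i j assume i: "i < dim_row (- 1\<^sub>m N :: 'a mat)" and j: "j < dim_col (- 1\<^sub>m N :: 'a mat)"
      hence i: "i < N" and j: "j < N" by auto
      let ?ui = "unit_vec N i :: 'a vec" and ?uj = "unit_vec N j :: 'a vec"
      have ci: "?ui @\<^sub>v (transpose_mat A *\<^sub>v ?ui) \<in> dual_code (2*N) S"
        using eq unfolding S_def by auto
      have cj: "?uj @\<^sub>v (transpose_mat A *\<^sub>v ?uj) \<in> S" unfolding S_def by auto
      from ci cj have "(?ui @\<^sub>v (transpose_mat A *\<^sub>v ?ui)) \<bullet> (?uj @\<^sub>v (transpose_mat A *\<^sub>v ?uj)) = 0"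
        unfolding dual_code_def mult_2 by auto
      hence "?ui \<bullet> ?uj + ?ui \<bullet> ((A * transpose_mat A) *\<^sub>v ?uj) = 0" by (simp add: dotS)
      moreover have "?ui \<bullet> ?uj = (1\<^sub>m N :: 'a mat) $$ (i,j)" using i j by simp
      moreover have "?ui \<bullet> ((A * transpose_mat A) *\<^sub>v ?uj) = (A * transpose_mat A) $$ (i,j)"
      proof -
        have M: "A * transpose_mat A \<in> carrier_mat N N" using A by simp
        have "?ui \<bullet> ((A * transpose_mat A) *\<^sub>v ?uj) = ((A * transpose_mat A) *\<^sub>v ?uj) $ i"
          by (rule scalar_prod_left_unit) (use M i in auto)
        also have "\<dots> = row (A * transpose_mat A) i \<bullet> ?uj" using M i by (intro index_mult_mat_vec) auto
        also have "\<dots> = row (A * transpose_mat A) i $ j"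
          by (rule scalar_prod_right_unit) (use M j in auto)
        also have "\<dots> = (A * transpose_mat A) $$ (i,j)" by (rule index_row) (use M i j in auto)
        finally show ?thesis .
      qed
      ultimately have "(1\<^sub>m N :: 'a mat) $$ (i,j) + (A * transpose_mat A) $$ (i,j) = 0" by simp
      then show "(A * transpose_mat A) $$ (i,j) = (- 1\<^sub>m N :: 'a mat) $$ (i,j)"
      proof -
        assume h: "(1\<^sub>m N :: 'a mat) $$ (i,j) + (A * transpose_mat A) $$ (i,j) = 0"
        have "(- 1\<^sub>m N :: 'a mat) $$ (i,j) = - ((1\<^sub>m N :: 'a mat) $$ (i,j))" using i j by simp
        also have "\<dots> = (A * transpose_mat A) $$ (i,j)" using neg_eq_iff_add_eq_0[THEN iffD2, OF h] .
        finally show ?thesis by simp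
      qed
    qed (use A in auto)
  next
    assume AAT: "A * transpose_mat A = - 1\<^sub>m N"
    have "A * (- transpose_mat A) = 1\<^sub>m N" using AAT by simp
    from left_right_inv[OF A _ this] AT have "- transpose_mat A * A = 1\<^sub>m N" by simp
    hence ATA: "transpose_mat A * A = - 1\<^sub>m N"
    proof -
      have "- (transpose_mat A * A) = 1\<^sub>m N" using \<open>- transpose_mat A * A = 1\<^sub>m N\<close> by simp
      hence "- (- (transpose_mat A * A)) = - 1\<^sub>m N" by simp
      thus ?thesis by simp
    qed
    show "S = dual_code (2*N) S"
    proof
      show "S \<subseteq> dual_code (2*N) S"
      proof
        fix c assume "c \<in> S"
        then obtain u where c: "c = u @\<^sub>v (transpose_mat A *\<^sub>v u)" and u: "u \<in> carrier_vec N"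
          unfolding S_def by auto
        have "c \<bullet> d = 0" if "d \<in> S" for d
        proof -
          obtain v where d: "d = v @\<^sub>v (transpose_mat A *\<^sub>v v)" and v: "v \<in> carrier_vec N"
            using \<open>d \<in> S\<close> unfolding S_def by auto
          have "c \<bullet> d = u \<bullet> v + u \<bullet> (- (1\<^sub>m N *\<^sub>v v))" unfolding c d dotS[OF u v] AAT
            using v by simp
          also have "\<dots> = 0" using u v by simp
          finally show ?thesis .
        qed
        then show "c \<in> dual_code (2*N) S" using Scar \<open>c \<in> S\<close> unfolding dual_code_def mult_2 by auto
      qed
    next
      show "dual_code (2*N) S \<subseteq> S"
      proof
        fix x assume x: "x \<in> dual_code (2*N) S"
        hence xc: "x \<in> carrier_vec (N + N)" and orth: "\<And>c. c \<in> S \<Longrightarrow> x \<bullet> c = 0"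
          unfolding dual_code_def mult_2 by auto
        define x1 where "x1 = vec_first x N"
        define x2 where "x2 = vec_last x N"
        have xx: "x = x1 @\<^sub>v x2" using xc unfolding x1_def x2_def by simp
        have x1: "x1 \<in> carrier_vec N" and x2: "x2 \<in> carrier_vec N" unfolding x1_def x2_def by auto
        have X0: "(x1 + A *\<^sub>v x2) $ i = 0" if i: "i < N" for i
        proof -
          let ?u = "unit_vec N i :: 'a vec"
          have "x \<bullet> (?u @\<^sub>v (transpose_mat A *\<^sub>v ?u)) = 0" by (rule orth) (auto simp: S_def)
          also have "x \<bullet> (?u @\<^sub>v (transpose_mat A *\<^sub>v ?u)) = x1 \<bullet> ?u + x2 \<bullet> (transpose_mat A *\<^sub>v ?u)"
            unfolding xx by (rule scalar_prod_append[of _ N _ N]) (use x1 x2 AT in auto)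
          also have "x2 \<bullet> (transpose_mat A *\<^sub>v ?u) = (transpose_mat A *\<^sub>v ?u) \<bullet> x2"
            by (rule comm_scalar_prod) (use x2 AT in auto)
          also have "\<dots> = ?u \<bullet> (A *\<^sub>v x2)"
            by (rule transpose_vec_mult_scalar[OF A]) (use x2 in auto)
          finally show ?thesis using i x1 x2 A by simp
        qed
        hence x1eq: "x1 = - (A *\<^sub>v x2)"
        proof (intro eq_vecI)
          fix i assume "i < dim_vec (- (A *\<^sub>v x2))"
          hence i: "i < N" using A by simp
          have "x1 $ i + (A *\<^sub>v x2) $ i = 0" using X0[OF i] i A x1 x2 by simp
          from eq_neg_iff_add_eq_0[THEN iffD2, OF this] show "x1 $ i = (- (A *\<^sub>v x2)) $ i" using i A by simp
        qed (use x1 A in simp)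
        have "transpose_mat A *\<^sub>v x1 = x2"
        proof -
          have "transpose_mat A *\<^sub>v x1 = - (transpose_mat A *\<^sub>v (A *\<^sub>v x2))"
            unfolding x1eq using A x2 AT
            by (intro eq_vecI) (simp_all add: A)
          also have "transpose_mat A *\<^sub>v (A *\<^sub>v x2) = (transpose_mat A * A) *\<^sub>v x2"
            using A AT x2 by simp
          also have "\<dots> = - x2" unfolding ATA using x2 by simp
          finally show ?thesis by simp
        qed
        hence "x = x1 @\<^sub>v (transpose_mat A *\<^sub>v x1)" using xx by simp
        thus "x \<in> S" using x1 unfolding S_def by auto
      qed
    qed
  qed
qed

lemma char2_add:
  assumes "CHAR('a::comm_ring_1) = 2"
  shows "(x::'a) + x = 0"
proof -
  have "(of_nat CHAR('a) :: 'a) = 0" by (rule of_nat_CHAR)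
  hence "(of_nat 2 :: 'a) = 0" by (simp only: assms)
  hence "(2::'a) = 0" by (simp only: of_nat_numeral)
  have "x + x = 2 * x" by (rule mult_2[symmetric])
  also have "\<dots> = 0" using \<open>(2::'a) = 0\<close> by (simp only: mult_zero_left)
  finally show ?thesis .
qed

lemma four_block_eq_iff:
  assumes "A1 \<in> carrier_mat n n" "B1 \<in> carrier_mat n n" "C1 \<in> carrier_mat n n" "D1 \<in> carrier_mat n n"
    "A2 \<in> carrier_mat n n" "B2 \<in> carrier_mat n n" "C2 \<in> carrier_mat n n" "D2 \<in> carrier_mat n n"
  shows "four_block_mat A1 B1 C1 D1 = four_block_mat A2 B2 C2 D2 \<longleftrightarrow> A1 = A2 \<and> B1 = B2 \<and> C1 = C2 \<and> D1 = D2"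
proof
  assume eq: "four_block_mat A1 B1 C1 D1 = four_block_mat A2 B2 C2 D2"
  have e: "four_block_mat A1 B1 C1 D1 $$ (i,j) = four_block_mat A2 B2 C2 D2 $$ (i,j)" for i j
    using eq by simp
  have "A1 = A2"
  proof (rule eq_matI)
    fix i j assume "i < dim_row A2" "j < dim_col A2"
    thus "A1 $$ (i,j) = A2 $$ (i,j)" using e[of i j] assms by simp
  qed (use assms in auto)
  moreover have "B1 = B2"
  proof (rule eq_matI)
    fix i j assume "i < dim_row B2" "j < dim_col B2"
    thus "B1 $$ (i,j) = B2 $$ (i,j)" using e[of i "j + n"] assms by simp
  qed (use assms in auto)
  moreover have "C1 = C2"
  proof (rule eq_matI)
    fix i j assume "i < dim_row C2" "j < dim_col C2"
    thus "C1 $$ (i,j) = C2 $$ (i,j)" using e[of "i + n" j] assms by simp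
  qed (use assms in auto)
  moreover have "D1 = D2"
  proof (rule eq_matI)
    fix i j assume "i < dim_row D2" "j < dim_col D2"
    thus "D1 $$ (i,j) = D2 $$ (i,j)" using e[of "i + n" "j + n"] assms by simp
  qed (use assms in auto)
  ultimately show "A1 = A2 \<and> B1 = B2 \<and> C1 = C2 \<and> D1 = D2" by simp
qed simp

lemma block_cond:
  fixes B C :: "'a::comm_ring_1 mat"
  assumes ch: "CHAR('a) = 2" and B: "B \<in> carrier_mat n n" and C: "C \<in> carrier_mat n n"
  shows "four_block_mat B C C B * transpose_mat (four_block_mat B C C B) = - 1\<^sub>m (2*n) \<longleftrightarrow>
     ((B + C) * transpose_mat (B + C) = 1\<^sub>m n \<and> B * transpose_mat C = C * transpose_mat B)"
proof -
  have BT: "transpose_mat B \<in> carrier_mat n n" and CT: "transpose_mat C \<in> carrier_mat n n"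
    using B C by auto
  define P where "P = B * transpose_mat B"
  define Q where "Q = C * transpose_mat C"
  define R where "R = B * transpose_mat C"
  define S where "S = C * transpose_mat B"
  have PQRS: "P \<in> carrier_mat n n" "Q \<in> carrier_mat n n" "R \<in> carrier_mat n n" "S \<in> carrier_mat n n"
    unfolding P_def Q_def R_def S_def using B C by auto
  have "four_block_mat B C C B * transpose_mat (four_block_mat B C C B)
     = four_block_mat B C C B * four_block_mat (transpose_mat B) (transpose_mat C) (transpose_mat C) (transpose_mat B)"
    using transpose_four_block_mat[OF B C C B] by simp
  also have "\<dots> = four_block_mat (P + Q) (R + S) (S + R) (Q + P)"
    unfolding P_def Q_def R_def S_def by (rule mult_four_block_mat[OF B C C B BT CT CT BT])
  finally have AA: "four_block_mat B C C B * transpose_mat (four_block_mat B C C B) = four_block_mat (P + Q) (R + S) (S + R) (Q + P)" .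
  have M1: "- 1\<^sub>m (2*n) = four_block_mat (- 1\<^sub>m n) (0\<^sub>m n n) (0\<^sub>m n n) (- 1\<^sub>m n :: 'a mat)"
  proof (rule eq_matI)
    fix i j assume "i < dim_row (four_block_mat (- 1\<^sub>m n) (0\<^sub>m n n) (0\<^sub>m n n) (- 1\<^sub>m n :: 'a::comm_ring_1 mat))"
      "j < dim_col (four_block_mat (- 1\<^sub>m n) (0\<^sub>m n n) (0\<^sub>m n n) (- 1\<^sub>m n :: 'a::comm_ring_1 mat))"
    hence ij: "i < 2*n" "j < 2*n" by auto
    show "(- 1\<^sub>m (2*n) :: 'a mat) $$ (i,j) = four_block_mat (- 1\<^sub>m n) (0\<^sub>m n n) (0\<^sub>m n n) (- 1\<^sub>m n :: 'a::comm_ring_1 mat) $$ (i,j)"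
      using ij by (cases "i < n"; cases "j < n") auto
  qed auto
  have L: "four_block_mat B C C B * transpose_mat (four_block_mat B C C B) = - 1\<^sub>m (2*n) \<longleftrightarrow>
     (P + Q = - 1\<^sub>m n \<and> R + S = 0\<^sub>m n n \<and> S + R = 0\<^sub>m n n \<and> Q + P = - 1\<^sub>m n)"
    unfolding AA M1 by (rule four_block_eq_iff) (use PQRS in auto)
  have BC: "(B + C) * transpose_mat (B + C) = P + R + (S + Q)"
  proof -
    have "transpose_mat (B + C) = transpose_mat B + transpose_mat C" using B C by (simp add: transpose_add)
    hence "(B + C) * transpose_mat (B + C) = B * (transpose_mat B + transpose_mat C) + C * (transpose_mat B + transpose_mat C)"
      using add_mult_distrib_mat[OF B C, of "transpose_mat B + transpose_mat C" n] BT CT by simp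
    also have "\<dots> = P + R + (S + Q)" unfolding P_def Q_def R_def S_def
      using mult_add_distrib_mat[OF B BT CT] mult_add_distrib_mat[OF C BT CT] by simp
    finally show ?thesis .
  qed
  have c2: "\<And>x::'a. x + x = 0" using char2_add[OF ch] .
  have neg: "\<And>x::'a. - x = x" using c2 by (metis neg_eq_iff_add_eq_0)
  have pt: "(p + q = - e \<and> r + s = 0 \<and> s + r = 0 \<and> q + p = - e) \<longleftrightarrow> (p + r + (s + q) = e \<and> r = s)" for p q r s e :: 'a
  proof -
    have rs: "r + s = 0 \<longleftrightarrow> r = s" using eq_neg_iff_add_eq_0[of r s] unfolding neg[of s] by blast
    have srs: "s + r = 0 \<longleftrightarrow> r = s" using rs by (simp add: add.commute)
    have ne: "- e = e" by (rule neg)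
    have qp: "q + p = p + q" by (simp add: add.commute)
    have re: "p + r + (s + q) = p + q + (r + s)" by (simp add: algebra_simps)
    have "(p + q = - e \<and> r + s = 0 \<and> s + r = 0 \<and> q + p = - e) \<longleftrightarrow> (p + q = e \<and> r = s)"
      unfolding rs srs ne qp by blast
    also have "\<dots> \<longleftrightarrow> (p + r + (s + q) = e \<and> r = s)"
      unfolding re using rs by auto
    finally show ?thesis .
  qed
  show ?thesis unfolding L BC R_def[symmetric] S_def[symmetric]
  proof
    assume H: "P + Q = - 1\<^sub>m n \<and> R + S = 0\<^sub>m n n \<and> S + R = 0\<^sub>m n n \<and> Q + P = - 1\<^sub>m n"
    have pw: "P$$(i,j) + R$$(i,j) + (S$$(i,j) + Q$$(i,j)) = (1\<^sub>m n :: 'a mat) $$(i,j) \<and> R$$(i,j) = S$$(i,j)"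
      if ij: "i < n" "j < n" for i j
    proof -
      from H have "(P+Q)$$(i,j) = (- 1\<^sub>m n :: 'a mat)$$(i,j)" "(R+S)$$(i,j) = (0\<^sub>m n n :: 'a mat)$$(i,j)"
        "(S+R)$$(i,j) = (0\<^sub>m n n :: 'a mat)$$(i,j)" "(Q+P)$$(i,j) = (- 1\<^sub>m n :: 'a mat)$$(i,j)" by simp_all
      hence "P$$(i,j) + Q$$(i,j) = - (1\<^sub>m n :: 'a mat)$$(i,j) \<and> R$$(i,j) + S$$(i,j) = 0 \<and>
          S$$(i,j) + R$$(i,j) = 0 \<and> Q$$(i,j) + P$$(i,j) = - (1\<^sub>m n :: 'a mat)$$(i,j)"
        using ij PQRS by simp
      thus ?thesis using pt by blast
    qed
    have g1: "P + R + (S + Q) = 1\<^sub>m n"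
      proof (rule eq_matI)
        fix i j assume "i < dim_row (1\<^sub>m n :: 'a mat)" "j < dim_col (1\<^sub>m n :: 'a mat)"
        hence ij: "i < n" "j < n" by simp_all
        have "(P + R + (S + Q)) $$ (i,j) = P$$(i,j) + R$$(i,j) + (S$$(i,j) + Q$$(i,j))" using ij PQRS by simp
        also have "\<dots> = (1\<^sub>m n :: 'a mat) $$ (i,j)" using pw[OF ij] by (rule conjunct1)
        finally show "(P + R + (S + Q)) $$ (i,j) = (1\<^sub>m n :: 'a mat) $$ (i,j)" .
      qed (use PQRS in auto)
      have g2: "R = S"
      proof (rule eq_matI)
        fix i j assume "i < dim_row S" "j < dim_col S"
        hence ij: "i < n" "j < n" using PQRS by simp_all
        show "R $$ (i,j) = S $$ (i,j)" using pw[OF ij] by (rule conjunct2)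
      qed (use PQRS in auto)
    show "P + R + (S + Q) = 1\<^sub>m n \<and> R = S" using g1 g2 by (rule conjI)
  next
    assume H: "P + R + (S + Q) = 1\<^sub>m n \<and> R = S"
    have pw: "P$$(i,j) + Q$$(i,j) = - (1\<^sub>m n :: 'a mat)$$(i,j) \<and> R$$(i,j) + S$$(i,j) = 0 \<and>
          S$$(i,j) + R$$(i,j) = 0 \<and> Q$$(i,j) + P$$(i,j) = - (1\<^sub>m n :: 'a mat)$$(i,j)"
      if ij: "i < n" "j < n" for i j
    proof -
      from H have "(P + R + (S + Q))$$(i,j) = (1\<^sub>m n :: 'a mat)$$(i,j)" "R$$(i,j) = S$$(i,j)"
        by (metis, metis)
      note e = this
      have ex: "(P + R + (S + Q))$$(i,j) = P$$(i,j) + R$$(i,j) + (S$$(i,j) + Q$$(i,j))" using ij PQRS by simp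
      have "P$$(i,j) + R$$(i,j) + (S$$(i,j) + Q$$(i,j)) = (1\<^sub>m n :: 'a mat) $$(i,j) \<and> R$$(i,j) = S$$(i,j)"
        using trans[OF ex[symmetric] e(1)] e(2) by (rule conjI)
      thus ?thesis using pt by blast
    qed
    show "P + Q = - 1\<^sub>m n \<and> R + S = 0\<^sub>m n n \<and> S + R = 0\<^sub>m n n \<and> Q + P = - 1\<^sub>m n"
    proof (intro conjI)
      show "P + Q = - 1\<^sub>m n"
      proof (rule eq_matI)
        fix i j assume "i < dim_row (- 1\<^sub>m n :: 'a mat)" "j < dim_col (- 1\<^sub>m n :: 'a mat)"
        hence ij: "i < n" "j < n" by simp_all
        have "(P + Q) $$ (i,j) = P$$(i,j) + Q$$(i,j)" using ij PQRS by simp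
        also have "\<dots> = - (1\<^sub>m n :: 'a mat) $$ (i,j)" using pw[OF ij] by blast
        finally show "(P + Q) $$ (i,j) = (- 1\<^sub>m n :: 'a mat) $$ (i,j)" using ij by simp
      qed (use PQRS in auto)
      show "Q + P = - 1\<^sub>m n"
      proof (rule eq_matI)
        fix i j assume "i < dim_row (- 1\<^sub>m n :: 'a mat)" "j < dim_col (- 1\<^sub>m n :: 'a mat)"
        hence ij: "i < n" "j < n" by simp_all
        have "(Q + P) $$ (i,j) = Q$$(i,j) + P$$(i,j)" using ij PQRS by simp
        also have "\<dots> = - (1\<^sub>m n :: 'a mat) $$ (i,j)" using pw[OF ij] by blast
        finally show "(Q + P) $$ (i,j) = (- 1\<^sub>m n :: 'a mat) $$ (i,j)" using ij by simp
      qed (use PQRS in auto)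
      show "R + S = 0\<^sub>m n n"
      proof (rule eq_matI)
        fix i j assume "i < dim_row (0\<^sub>m n n :: 'a mat)" "j < dim_col (0\<^sub>m n n :: 'a mat)"
        hence ij: "i < n" "j < n" by simp_all
        have "(R + S) $$ (i,j) = R$$(i,j) + S$$(i,j)" using ij PQRS by simp
        also have "\<dots> = 0" using pw[OF ij] by blast
        finally show "(R + S) $$ (i,j) = (0\<^sub>m n n :: 'a mat) $$ (i,j)" using ij by simp
      qed (use PQRS in auto)
      show "S + R = 0\<^sub>m n n"
      proof (rule eq_matI)
        fix i j assume "i < dim_row (0\<^sub>m n n :: 'a mat)" "j < dim_col (0\<^sub>m n n :: 'a mat)"
        hence ij: "i < n" "j < n" by simp_all
        have "(S + R) $$ (i,j) = S$$(i,j) + R$$(i,j)" using ij PQRS by simp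
        also have "\<dots> = 0" using pw[OF ij] by blast
        finally show "(S + R) $$ (i,j) = (0\<^sub>m n n :: 'a mat) $$ (i,j)" using ij by simp
      qed (use PQRS in auto)
    qed
  qed
qed

lemma setcong:
  assumes h: "\<And>u. u \<in> X \<Longrightarrow> F u = H u"
  shows "{F u | u. u \<in> X} = {H u | u. u \<in> X}"
proof -
  have "{F u | u. u \<in> X} = F ` X" by blast
  also have "\<dots> = H ` X" using h by (rule image_cong[OF refl])
  also have "\<dots> = {H u | u. u \<in> X}" by blast
  finally show ?thesis .
qed

theorem mainTheorem1:
  fixes B C :: "'a :: {comm_ring_1, finite} mat" and n :: nat
  assumes "Frobenius_ring TYPE('a)"
    and "CHAR('a) = 2"
    and "B \<in> carrier_mat n n" and "C \<in> carrier_mat n n"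
  shows "self_dual (4*n) (code_gen (gen_matrix n B C)) \<longleftrightarrow>
           ((B + C) * transpose_mat (B + C) = 1\<^sub>m n \<and> B * transpose_mat C = C * transpose_mat B)"
proof -
  note B = assms(3) and C = assms(4)
  define A where "A = four_block_mat B C C B"
  have A: "A \<in> carrier_mat (2*n) (2*n)" unfolding A_def using B C
    by (metis four_block_carrier_mat mult_2)
  have n4: "4 * n = 2 * (2 * n)" by simp
  have G: "gen_matrix n B C = mat (2*n) (2*(2*n)) (\<lambda>(i,j). if j < 2*n then (1\<^sub>m (2*n)) $$ (i,j) else A $$ (i, j - 2*n))"
    unfolding gen_matrix_def Let_def A_def n4 ..
  have code: "code_gen (gen_matrix n B C) = {u @\<^sub>v (transpose_mat A *\<^sub>v u) | u. u \<in> carrier_vec (2*n)}"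
  proof -
    have dr: "dim_row (gen_matrix n B C) = 2*n" unfolding G by simp
    show ?thesis unfolding code_gen_def dr unfolding G
      by (rule setcong) (rule GT[OF A])
  qed
  show ?thesis
    unfolding self_dual_def code n4 sd_iff[OF A] unfolding A_def
    by (rule block_cond[OF assms(2) B C])
qed

end
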